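(* Let $N\ge1$, $\mathbf{S}=(\mathsf{SNR}_{s,r},\mathsf{SNR}_{s,1},\dots,\mathsf{SNR}_{s,N},\mathsf{SNR}_{r,1},\dots,\mathsf{SNR}_{r,N})\in[0,\infty)^{2N+1}$, $\rho\in[0,1]$, $\mathsf{C}(x)=\tfrac12\log(1+x)$, and for $j=1,\dots,N$ $$f_j(\rho,\mathbf{S})=\mathsf{SNR}_{s,j}+\mathsf{SNR}_{r,j}+2\rho\sqrt{\mathsf{SNR}_{s,j}\mathsf{SNR}_{r,j}},\qquad g_j(\rho,\mathbf{S})=(1-\rho^2)(\mathsf{SNR}_{s,j}+\mathsf{SNR}_{s,r}),$$ $$R_{CS}(\rho,\mathbf{S})=\min_{1\le j\le N}\min\big(\mathsf{C}(f_j(\rho,\mathbf{S})),\mathsf{C}(g_j(\rho,\mathbf{S}))\big).$$ Then $R_{CS}(\rho,\mathbf{S})$ is concave in $\rho\in[0,1]$ for fixed $\mathbf{S}$, concave in $\mathbf{S}\in[0,\infty)^{2N+1}$ for fixed $\rho$, and the map $(t,\mathbf{S})\mapsto R_{CS}(\sqrt t,\mathbf{S})$ is quasi-concave on $[0,1]\times[0,\infty)^{2N+1}$ (i.e., $R_{CS}$ is quasi-concave in $(\rho^2,\mathbf{S})$).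
   Context: $R_{CS}$ is the cut-set bound expression for a real AWGN multicast relay channel with source $s$, relay $r$, destinations $1,\dots,N$, link SNRs $\mathsf{SNR}_{u,v}\ge0$, and source–relay input correlation coefficient $\rho$. A function $F$ on a convex set is quasi-concave if $F(\lambda x_1+(1-\lambda)x_2)\ge\min(F(x_1),F(x_2))$ for all $x_1,x_2$ and $\lambda\in[0,1]$. *)

theory Defs
  imports "HOL-Analysis.Analysis"
begin

text \<open>SNR vector S = (SNR_sr, (SNR_sj)_j, (SNR_rj)_j), destinations indexed by the
  finite type 'n with CARD('n) = N (N >= 1 automatically).\<close>
type_synonym 'n snr_vec = "real \<times> (real ^ 'n) \<times> (real ^ 'n)"

definition Ccap :: "real \<Rightarrow> real" where
  "Ccap x = 1/2 * log 2 (1 + x)"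

definition f_j :: "real \<Rightarrow> ('n::finite) snr_vec \<Rightarrow> 'n \<Rightarrow> real" where
  "f_j \<rho> S j = (let (ssr, ss, sr) = S in
      ss $ j + sr $ j + 2 * \<rho> * sqrt (ss $ j * sr $ j))"

definition g_j :: "real \<Rightarrow> ('n::finite) snr_vec \<Rightarrow> 'n \<Rightarrow> real" where
  "g_j \<rho> S j = (let (ssr, ss, sr) = S in (1 - \<rho>^2) * (ss $ j + ssr))"

definition R_CS :: "real \<Rightarrow> ('n::finite) snr_vec \<Rightarrow> real" where
  "R_CS \<rho> S = Min ((\<lambda>j. min (Ccap (f_j \<rho> S j)) (Ccap (g_j \<rho> S j))) ` UNIV)"

definition snr_dom :: "('n::finite) snr_vec set" where
  "snr_dom = {(ssr, ss, sr). 0 \<le> ssr \<and> (\<forall>j. 0 \<le> ss $ j) \<and> (\<forall>j. 0 \<le> sr $ j)}"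

definition quasiconcave_on :: "'a::real_vector set \<Rightarrow> ('a \<Rightarrow> real) \<Rightarrow> bool" where
  "quasiconcave_on A F \<longleftrightarrow>
     (\<forall>x1\<in>A. \<forall>x2\<in>A. \<forall>u::real. 0 \<le> u \<and> u \<le> 1 \<longrightarrow>
        F (u *\<^sub>R x1 + (1 - u) *\<^sub>R x2) \<ge> min (F x1) (F x2))"

end

theory Submission
  imports Defs
begin

lemma amgm2: fixes x y M :: real
  assumes "0 \<le> x" "0 \<le> y" "0 \<le> M" "M * M \<le> x * y"
  shows "2 * M \<le> x + y"
proof (rule ccontr)
  assume "\<not> ?thesis"
  hence h: "x + y < 2 * M" by simp
  hence "(x + y)^2 < (2 * M)^2" using assms by (intro power_strict_mono) auto
  moreover have "(x + y)^2 - 4 * (x * y) = (x - y)^2" by (simp add: power2_eq_square algebra_simps)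
  moreover have "(2 * M)^2 = 4 * (M * M)" by (simp add: power2_eq_square)
  ultimately show False using assms(4) zero_le_power2[of "x - y"] by linarith
qed

lemma prodq:
  fixes x1 x2 y1 y2 u v M :: real
  assumes "0 \<le> x1" "0 \<le> x2" "0 \<le> y1" "0 \<le> y2" "0 \<le> u" "0 \<le> v" "u + v = 1"
    "M \<le> x1 * y1" "M \<le> x2 * y2" "0 \<le> M"
  shows "M \<le> (u * x1 + v * x2) * (u * y1 + v * y2)"
proof -
  have p: "M * M \<le> (x1 * y2) * (x2 * y1)"
  proof -
    have "M * M \<le> (x1 * y1) * (x2 * y2)" using assms by (intro mult_mono) auto
    thus ?thesis by (simp add: algebra_simps)
  qed
  have c: "2 * M \<le> x1 * y2 + x2 * y1" using p assms by (intro amgm2) auto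
  have "(u * x1 + v * x2) * (u * y1 + v * y2) = u * u * (x1 * y1) + v * v * (x2 * y2) + u * v * (x1 * y2 + x2 * y1)"
    by (simp add: algebra_simps)
  also have "\<dots> \<ge> u * u * M + v * v * M + u * v * (2 * M)"
    using assms c by (intro add_mono mult_left_mono) auto
  also have "u * u * M + v * v * M + u * v * (2 * M) = (u + v)^2 * M" by (simp add: power2_eq_square algebra_simps)
  finally show ?thesis using assms by simp
qed

lemma sqrt_conc:
  fixes X1 X2 u v :: real
  assumes "0 \<le> X1" "0 \<le> X2" "0 \<le> u" "0 \<le> v" "u + v = 1"
  shows "u * sqrt X1 + v * sqrt X2 \<le> sqrt (u * X1 + v * X2)"
proof (rule real_le_rsqrt)
  define p where "p = sqrt X1" define q where "q = sqrt X2"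
  have e: "X1 = p^2" "X2 = q^2" using assms by (auto simp: p_def q_def)
  have v: "v = 1 - u" using assms by simp
  have id: "u * p^2 + (1-u) * q^2 - (u * p + (1-u) * q)^2 = u * (1-u) * (p-q)^2"
    by (simp add: power2_eq_square algebra_simps)
  have "0 \<le> u * (1-u) * (p-q)^2" using assms v by simp
  hence "(u * p + v * q)^2 \<le> u * X1 + v * X2"
    unfolding e v using id by linarith
  thus "(u * sqrt X1 + v * sqrt X2)^2 \<le> u * X1 + v * X2" by (simp add: p_def q_def)
qed

lemma gm_conc:
  fixes a1 a2 b1 b2 u v :: real
  assumes "0 \<le> a1" "0 \<le> a2" "0 \<le> b1" "0 \<le> b2" "0 \<le> u" "0 \<le> v"
  shows "u * sqrt(a1 * b1) + v * sqrt(a2 * b2) \<le> sqrt ((u * a1 + v * a2) * (u * b1 + v * b2))"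
proof (rule real_le_rsqrt)
  define A1 where "A1 = sqrt a1" define A2 where "A2 = sqrt a2"
  define B1 where "B1 = sqrt b1" define B2 where "B2 = sqrt b2"
  have e: "a1 = A1^2" "a2 = A2^2" "b1 = B1^2" "b2 = B2^2" using assms by (auto simp: A1_def A2_def B1_def B2_def)
  have s: "sqrt(a1 * b1) = A1 * B1" "sqrt(a2 * b2) = A2 * B2"
    using assms by (auto simp: A1_def A2_def B1_def B2_def real_sqrt_mult)
  have id: "(u * A1^2 + v * A2^2) * (u * B1^2 + v * B2^2) - (u * (A1 * B1) + v * (A2 * B2))^2 = u * v * (A1 * B2 - A2 * B1)^2"
    by (simp add: power2_eq_square algebra_simps)
  have "0 \<le> u * v * (A1 * B2 - A2 * B1)^2" using assms by simp
  hence "(u * (A1 * B1) + v * (A2 * B2))^2 \<le> (u * a1 + v * a2) * (u * b1 + v * b2)"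
    unfolding e using id by linarith
  thus "(u * sqrt(a1 * b1) + v * sqrt(a2 * b2))^2 \<le> (u * a1 + v * a2) * (u * b1 + v * b2)"
    unfolding s .
qed


definition FF :: "real \<Rightarrow> real \<Rightarrow> real \<Rightarrow> real" where
  "FF t a b = a + b + 2 * sqrt t * sqrt (a * b)"

lemma ineqI:
  fixes l m t a b :: real
  assumes "0 < l" "0 < m" "0 \<le> t" "0 \<le> a" "0 \<le> b"
  shows "2 * l * m * FF t a b \<le> (l * a + m * b) * (l + m + sqrt ((l - m)^2 + 4 * l * m * t))"
proof -
  define A where "A = sqrt a" define B where "B = sqrt b" define \<sigma> where "\<sigma> = sqrt t"
  define D where "D = (l - m)^2 + 4 * l * m * t"
  define r where "r = sqrt D"
  have Dge: "(l-m)^2 \<le> D" using assms by (simp add: D_def)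
  have D0: "0 \<le> D" using Dge by (meson order_trans zero_le_power2)
  have rr: "r^2 = D" using D0 by (simp add: r_def)
  have rabs: "\<bar>l - m\<bar> \<le> r" unfolding r_def using Dge
    by (metis real_sqrt_abs real_sqrt_le_mono)
  have e: "a = A^2" "b = B^2" "t = \<sigma>^2" using assms by (auto simp: A_def B_def \<sigma>_def)
  have sab: "sqrt (a * b) = A * B" using assms by (simp add: A_def B_def real_sqrt_mult)
  define X where "X = l * (l - m + r)"
  define Y where "Y = m * (m - l + r)"
  define Z where "Z = 2 * l * m * \<sigma>"
  have X0: "0 \<le> X" unfolding X_def using rabs assms by (intro mult_nonneg_nonneg) (auto simp: abs_le_iff)
  have Y0: "0 \<le> Y" unfolding Y_def using rabs assms by (intro mult_nonneg_nonneg) (auto simp: abs_le_iff)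
  have XYZ: "X * Y - Z^2 = 0"
  proof -
    have "X * Y - Z^2 = l * m * (r^2 - (l - m)^2) - 4 * l^2 * m^2 * \<sigma>^2"
      by (simp add: X_def Y_def Z_def power2_eq_square algebra_simps)
    also have "\<dots> = 0" unfolding rr D_def e(3) by (simp add: power2_eq_square algebra_simps)
    finally show ?thesis .
  qed
  have diff: "(l * a + m * b) * (l + m + r) - 2 * l * m * FF t a b = X * A^2 + Y * B^2 - 2 * Z * A * B"
    unfolding FF_def sab \<sigma>_def[symmetric] unfolding e(1,2)
    by (simp add: X_def Y_def Z_def power2_eq_square algebra_simps)
  have Q: "0 \<le> X * A^2 + Y * B^2 - 2 * Z * A * B"
  proof (cases "X = 0")
    case True
    hence "Z^2 = 0" using XYZ by simp
    hence "Z = 0" by simp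
    thus ?thesis using True Y0 by simp
  next
    case False
    hence Xp: "0 < X" using X0 by simp
    have "X * (X * A^2 + Y * B^2 - 2 * Z * A * B) = (X * A - Z * B)^2 + (X * Y - Z^2) * B^2"
      by (simp add: power2_eq_square algebra_simps)
    also have "\<dots> = (X * A - Z * B)^2" using XYZ by simp
    finally have "0 \<le> X * (X * A^2 + Y * B^2 - 2 * Z * A * B)" by simp
    thus ?thesis using Xp by (simp add: zero_le_mult_iff)
  qed
  show ?thesis using diff Q unfolding r_def D_def by linarith
qed

lemma eqE:
  fixes \<alpha> \<beta> s :: real
  assumes "0 < \<alpha>" "0 < \<beta>" "0 \<le> s"
  defines "l \<equiv> \<beta> * (\<alpha> + s * \<beta>)" and "m \<equiv> \<alpha> * (\<beta> + s * \<alpha>)"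
  shows "2 * l * m * FF (s^2) (\<alpha>^2) (\<beta>^2) = (l * \<alpha>^2 + m * \<beta>^2) * (l + m + sqrt ((l - m)^2 + 4 * l * m * s^2))"
proof -
  define f where "f = \<alpha>^2 + \<beta>^2 + 2 * s * \<alpha> * \<beta>"
  have f0: "0 \<le> f" using assms by (simp add: f_def)
  have FFe: "FF (s^2) (\<alpha>^2) (\<beta>^2) = f" using assms
    by (simp add: FF_def f_def real_sqrt_mult power_mult_distrib[symmetric])
  have "(l - m)^2 + 4 * l * m * s^2 = (s * f)^2"
    by (simp add: l_def m_def f_def power2_eq_square algebra_simps)
  hence sq: "sqrt ((l - m)^2 + 4 * l * m * s^2) = s * f" using f0 assms by simp
  show ?thesis unfolding sq FFe
    by (simp add: l_def m_def f_def power2_eq_square algebra_simps)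
qed

lemma min_le_comb: fixes x y u v :: real
  assumes "0 \<le> u" "0 \<le> v" "u + v = 1"
  shows "min x y \<le> u * x + v * y"
proof -
  have "u * min x y \<le> u * x" "v * min x y \<le> v * y" using assms by (auto intro: mult_left_mono)
  hence "u * min x y + v * min x y \<le> u * x + v * y" by linarith
  moreover have "u * min x y + v * min x y = min x y" using assms by (metis distrib_right mult_1)
  ultimately show ?thesis by simp
qed

lemma FF_nonneg: "0 \<le> t \<Longrightarrow> 0 \<le> a \<Longrightarrow> 0 \<le> b \<Longrightarrow> 0 \<le> FF t a b"
  by (simp add: FF_def)

lemma quasiF:
  fixes t1 t2 a1 a2 b1 b2 u v :: real
  assumes "0 \<le> t1" "0 \<le> t2" "0 \<le> a1" "0 \<le> a2" "0 \<le> b1" "0 \<le> b2" "0 \<le> u" "0 \<le> v" "u + v = 1"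
  shows "min (FF t1 a1 b1) (FF t2 a2 b2) \<le> FF (u * t1 + v * t2) (u * a1 + v * a2) (u * b1 + v * b2)"
proof -
  define tz where "tz = u * t1 + v * t2"
  define az where "az = u * a1 + v * a2"
  define bz where "bz = u * b1 + v * b2"
  have tz0: "0 \<le> tz" "0 \<le> az" "0 \<le> bz" using assms by (auto simp: tz_def az_def bz_def)
  have "min (FF t1 a1 b1) (FF t2 a2 b2) \<le> FF tz az bz"
  proof (cases "u = 0 \<or> v = 0")
    case True
    then show ?thesis using assms by (auto simp: tz_def az_def bz_def)
  next
    case False
    hence up: "0 < u" and vp: "0 < v" using assms by auto
    show ?thesis
    proof (cases "az = 0 \<or> bz = 0")
      case True
      then show ?thesis
      proof
        assume "az = 0"
        hence "a1 = 0" "a2 = 0" using up vp assms unfolding az_def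
          by (smt (verit) mult_nonneg_nonneg mult_pos_pos)+
        thus ?thesis using \<open>az = 0\<close> min_le_comb[OF assms(7-9), of b1 b2] by (simp add: FF_def bz_def)
      next
        assume "bz = 0"
        hence "b1 = 0" "b2 = 0" using up vp assms unfolding bz_def
          by (smt (verit) mult_nonneg_nonneg mult_pos_pos)+
        thus ?thesis using \<open>bz = 0\<close> min_le_comb[OF assms(7-9), of a1 a2] by (simp add: FF_def az_def)
      qed
    next
      case False
      hence azp: "0 < az" and bzp: "0 < bz" using tz0 by auto
      define \<alpha> where "\<alpha> = sqrt az" define \<beta> where "\<beta> = sqrt bz" define s where "s = sqrt tz"
      have ap: "0 < \<alpha>" "0 < \<beta>" "0 \<le> s" using azp bzp tz0 by (auto simp: \<alpha>_def \<beta>_def s_def)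
      have ez: "az = \<alpha>^2" "bz = \<beta>^2" "tz = s^2" using tz0 by (auto simp: \<alpha>_def \<beta>_def s_def)
      define l where "l = \<beta> * (\<alpha> + s * \<beta>)"
      define m where "m = \<alpha> * (\<beta> + s * \<alpha>)"
      have lp: "0 < l" "0 < m" using ap by (auto simp: l_def m_def intro!: mult_pos_pos add_pos_nonneg)
      define \<psi> where "\<psi> = (\<lambda>t. l + m + sqrt ((l - m)^2 + 4 * l * m * t))"
      define L where "L = (\<lambda>a b. l * a + m * b)"
      have E: "2 * l * m * FF tz az bz = L az bz * \<psi> tz"
        unfolding ez L_def \<psi>_def l_def m_def using eqE[OF ap] by simp
      have I1: "2 * l * m * FF t1 a1 b1 \<le> L a1 b1 * \<psi> t1"
        unfolding L_def \<psi>_def using ineqI[OF lp] assms by simp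
      have I2: "2 * l * m * FF t2 a2 b2 \<le> L a2 b2 * \<psi> t2"
        unfolding L_def \<psi>_def using ineqI[OF lp] assms by simp
      have Xn: "0 \<le> (l - m)^2 + 4 * l * m * t" if "0 \<le> t" for t
        using lp that by (intro add_nonneg_nonneg) auto
      have comb: "u * ((l - m)^2 + 4 * l * m * t1) + v * ((l - m)^2 + 4 * l * m * t2) = (l - m)^2 + 4 * l * m * tz"
      proof -
        have "u * ((l - m)^2 + 4 * l * m * t1) + v * ((l - m)^2 + 4 * l * m * t2) = (u + v) * (l - m)^2 + 4 * l * m * tz"
          by (simp add: tz_def algebra_simps)
        thus ?thesis using assms by simp
      qed
      have psi: "u * \<psi> t1 + v * \<psi> t2 \<le> \<psi> tz"
      proof -
        have "u * sqrt ((l - m)^2 + 4 * l * m * t1) + v * sqrt ((l - m)^2 + 4 * l * m * t2) \<le> sqrt ((l - m)^2 + 4 * l * m * tz)"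
          using sqrt_conc[OF Xn[OF assms(1)] Xn[OF assms(2)] assms(7-9)] comb by simp
        moreover have "u * \<psi> t1 + v * \<psi> t2 = (u + v) * (l + m) + (u * sqrt ((l - m)^2 + 4 * l * m * t1) + v * sqrt ((l - m)^2 + 4 * l * m * t2))"
          by (simp add: \<psi>_def algebra_simps)
        ultimately show ?thesis using assms by (simp add: \<psi>_def)
      qed
      have psi0: "0 \<le> \<psi> t" if "0 \<le> t" for t using lp Xn[OF that] by (simp add: \<psi>_def add_nonneg_nonneg)
      have L0: "0 \<le> L a b" if "0 \<le> a" "0 \<le> b" for a b using lp that by (simp add: L_def)
      have Lz: "L az bz = u * L a1 b1 + v * L a2 b2" by (simp add: L_def az_def bz_def algebra_simps)
      define mm where "mm = min (FF t1 a1 b1) (FF t2 a2 b2)"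
      have mm0: "0 \<le> mm" using assms by (simp add: mm_def FF_nonneg)
      have lm: "0 < 2 * l * m" using lp by simp
      have M1: "2 * l * m * mm \<le> L a1 b1 * \<psi> t1"
        using I1 lm by (smt (verit) mm_def min.cobounded1 mult_left_mono)
      have M2: "2 * l * m * mm \<le> L a2 b2 * \<psi> t2"
        using I2 lm by (smt (verit) mm_def min.cobounded2 mult_left_mono)
      have "2 * l * m * mm \<le> (u * L a1 b1 + v * L a2 b2) * (u * \<psi> t1 + v * \<psi> t2)"
        by (rule prodq) (use assms L0 psi0[OF assms(1)] psi0[OF assms(2)] M1 M2 mm0 lm in auto)
      also have "\<dots> \<le> L az bz * \<psi> tz"
        unfolding Lz[symmetric] using psi L0[OF tz0(2,3)] by (simp add: mult_left_mono)
      also have "\<dots> = 2 * l * m * FF tz az bz" using E by simp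
      finally have "(2 * l * m) * mm \<le> (2 * l * m) * FF tz az bz" .
      thus ?thesis using lm unfolding mm_def by (rule mult_left_le_imp_le)
    qed
  qed
  thus ?thesis by (simp add: tz_def az_def bz_def)
qed


lemma quasiG:
  fixes t1 t2 c1 c2 u v :: real
  assumes "t1 \<le> 1" "t2 \<le> 1" "0 \<le> c1" "0 \<le> c2" "0 \<le> u" "0 \<le> v" "u + v = 1"
  shows "min ((1 - t1) * c1) ((1 - t2) * c2) \<le> (1 - (u * t1 + v * t2)) * (u * c1 + v * c2)"
proof -
  have "1 - (u * t1 + v * t2) = u * (1 - t1) + v * (1 - t2)" using assms by (simp add: algebra_simps)
  moreover have "min ((1 - t1) * c1) ((1 - t2) * c2) \<le> (u * (1 - t1) + v * (1 - t2)) * (u * c1 + v * c2)"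
    by (rule prodq) (use assms in auto)
  ultimately show ?thesis by simp
qed


lemma Cmono: "0 \<le> p \<Longrightarrow> p \<le> q \<Longrightarrow> Ccap p \<le> Ccap q"
  by (simp add: Ccap_def)

lemma Cmin: "0 \<le> p \<Longrightarrow> 0 \<le> q \<Longrightarrow> Ccap (min p q) = min (Ccap p) (Ccap q)"
  by (cases "p \<le> q") (auto simp: min_def Cmono dest: Cmono[of q p])

lemma Cconc:
  fixes p q u v :: real
  assumes "0 \<le> p" "0 \<le> q" "0 \<le> u" "0 \<le> v" "u + v = 1"
  shows "u * Ccap p + v * Ccap q \<le> Ccap (u * p + v * q)"
proof -
  have "u * ln (1 + p) + v * ln (1 + q) \<le> ln (u * (1 + p) + v * (1 + q))"
    using ln_concave assms unfolding concave_on_iff by (auto simp: add_pos_nonneg)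
  moreover have "u * (1 + p) + v * (1 + q) = 1 + (u * p + v * q)" using assms by (simp add: algebra_simps)
  ultimately have h: "u * ln (1 + p) + v * ln (1 + q) \<le> ln (1 + (u * p + v * q))" by simp
  have "u * Ccap p + v * Ccap q = (u * ln (1 + p) + v * ln (1 + q)) / (2 * ln 2)"
    by (simp add: Ccap_def log_def field_simps)
  also have "\<dots> \<le> ln (1 + (u * p + v * q)) / (2 * ln 2)"
    using h by (simp add: divide_right_mono)
  also have "\<dots> = Ccap (u * p + v * q)" by (simp add: Ccap_def log_def)
  finally show ?thesis .
qed

lemma R_le: "R_CS \<rho> S \<le> min (Ccap (f_j \<rho> S j)) (Ccap (g_j \<rho> S j))"
  unfolding R_CS_def by (rule Min_le) auto

lemma R_ge:
  assumes "\<And>j. x \<le> min (Ccap (f_j \<rho> S j)) (Ccap (g_j \<rho> S j))"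
  shows "x \<le> R_CS \<rho> S"
  unfolding R_CS_def using assms by (intro Min.boundedI) auto

lemma Rconc:
  assumes "0 \<le> u" "0 \<le> v"
    and F: "\<And>j. u * Ccap (f_j r1 S1 j) + v * Ccap (f_j r2 S2 j) \<le> Ccap (f_j rz Sz j)"
    and G: "\<And>j. u * Ccap (g_j r1 S1 j) + v * Ccap (g_j r2 S2 j) \<le> Ccap (g_j rz Sz j)"
  shows "u * R_CS r1 S1 + v * R_CS r2 S2 \<le> R_CS rz Sz"
proof (rule R_ge)
  fix j
  have a: "u * R_CS r1 S1 \<le> u * Ccap (f_j r1 S1 j)" "u * R_CS r1 S1 \<le> u * Ccap (g_j r1 S1 j)"
    using R_le[of r1 S1 j] assms(1) by (auto intro: mult_left_mono)
  have b: "v * R_CS r2 S2 \<le> v * Ccap (f_j r2 S2 j)" "v * R_CS r2 S2 \<le> v * Ccap (g_j r2 S2 j)"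
    using R_le[of r2 S2 j] assms(2) by (auto intro: mult_left_mono)
  show "u * R_CS r1 S1 + v * R_CS r2 S2 \<le> min (Ccap (f_j rz Sz j)) (Ccap (g_j rz Sz j))"
    using a b F[of j] G[of j] by simp
qed

lemma Rquasi:
  assumes F: "\<And>j. min (Ccap (f_j r1 S1 j)) (Ccap (f_j r2 S2 j)) \<le> Ccap (f_j rz Sz j)"
    and G: "\<And>j. min (Ccap (g_j r1 S1 j)) (Ccap (g_j r2 S2 j)) \<le> Ccap (g_j rz Sz j)"
  shows "min (R_CS r1 S1) (R_CS r2 S2) \<le> R_CS rz Sz"
proof (rule R_ge)
  fix j
  show "min (R_CS r1 S1) (R_CS r2 S2) \<le> min (Ccap (f_j rz Sz j)) (Ccap (g_j rz Sz j))"
  proof (rule min.boundedI)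
    have "min (R_CS r1 S1) (R_CS r2 S2) \<le> min (Ccap (f_j r1 S1 j)) (Ccap (f_j r2 S2 j))"
      using R_le[of r1 S1 j] R_le[of r2 S2 j] by (intro min.mono) auto
    thus "min (R_CS r1 S1) (R_CS r2 S2) \<le> Ccap (f_j rz Sz j)" using F[of j] by linarith
    have "min (R_CS r1 S1) (R_CS r2 S2) \<le> min (Ccap (g_j r1 S1 j)) (Ccap (g_j r2 S2 j))"
      using R_le[of r1 S1 j] R_le[of r2 S2 j] by (intro min.mono) auto
    thus "min (R_CS r1 S1) (R_CS r2 S2) \<le> Ccap (g_j rz Sz j)" using G[of j] by linarith
  qed
qed

lemma dom_iff: "(ssr, ss, sr) \<in> snr_dom \<longleftrightarrow> 0 \<le> ssr \<and> (\<forall>j. 0 \<le> ss $ j) \<and> (\<forall>j. 0 \<le> sr $ j)"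
  by (simp add: snr_dom_def)

lemma f_j_eq: "f_j \<rho> (ssr, ss, sr) j = ss $ j + sr $ j + 2 * \<rho> * sqrt (ss $ j * sr $ j)"
  by (simp add: f_j_def)

lemma g_j_eq: "g_j \<rho> (ssr, ss, sr) j = (1 - \<rho>^2) * (ss $ j + ssr)"
  by (simp add: g_j_def)

lemma convex_dom: "convex (snr_dom :: ('n::finite) snr_vec set)"
proof (rule convexI)
  fix x y :: "'n snr_vec" and u v :: real
  assume xy: "x \<in> snr_dom" "y \<in> snr_dom" and uv: "0 \<le> u" "0 \<le> v" "u + v = 1"
  obtain a1 b1 c1 where x: "x = (a1, b1, c1)" by (cases x) auto
  obtain a2 b2 c2 where y: "y = (a2, b2, c2)" by (cases y) auto
  from xy uv show "u *\<^sub>R x + v *\<^sub>R y \<in> snr_dom"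
    unfolding x y by (auto simp: dom_iff intro!: add_nonneg_nonneg mult_nonneg_nonneg)
qed

lemma sq_conv: fixes x y u v :: real assumes "0 \<le> u" "0 \<le> v" "u + v = 1"
  shows "(u * x + v * y)^2 \<le> u * x^2 + v * y^2"
proof -
  have v: "v = 1 - u" using assms by simp
  have "u * x^2 + (1-u) * y^2 - (u * x + (1-u) * y)^2 = u * (1-u) * (x - y)^2"
    by (simp add: power2_eq_square algebra_simps)
  moreover have "0 \<le> u * (1-u) * (x - y)^2" using assms v by simp
  ultimately show ?thesis unfolding v by linarith
qed

lemma part1:
  fixes S :: "('n::finite) snr_vec"
  assumes S: "S \<in> snr_dom"
  shows "concave_on {0..1} (\<lambda>\<rho>. R_CS \<rho> S)"
proof -
  obtain ssr ss sr where Se: "S = (ssr, ss, sr)" by (cases S) auto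
  have nn: "0 \<le> ssr" "\<And>j. 0 \<le> ss $ j" "\<And>j. 0 \<le> sr $ j" using S by (auto simp: Se dom_iff)
  have main: "u * R_CS x S + v * R_CS y S \<le> R_CS (u * x + v * y) S"
    if x: "x \<in> {0..1}" and y: "y \<in> {0..1}" and u: "0 \<le> u" and v: "0 \<le> v" and uv: "u + v = 1"
    for x y u v :: real
  proof (rule Rconc[OF u v])
    fix j
    define a where "a = ss $ j + sr $ j"
    define q where "q = 2 * sqrt (ss $ j * sr $ j)"
    have fe: "f_j r S j = a + r * q" for r unfolding Se f_j_eq a_def q_def by (simp add: algebra_simps)
    have a0: "0 \<le> a" "0 \<le> q" using nn by (auto simp: a_def q_def)
    have x0: "0 \<le> x" and y0: "0 \<le> y" using x y by auto
    have "u * f_j x S j + v * f_j y S j = (u + v) * a + (u * x + v * y) * q"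
      unfolding fe by (simp add: algebra_simps)
    hence fz: "f_j (u * x + v * y) S j = u * f_j x S j + v * f_j y S j"
      unfolding fe using uv by simp
    have f0: "0 \<le> f_j r S j" if "0 \<le> r" for r
      unfolding fe using a0 that by simp
    show "u * Ccap (f_j x S j) + v * Ccap (f_j y S j) \<le> Ccap (f_j (u * x + v * y) S j)"
      unfolding fz by (rule Cconc[OF f0[OF x0] f0[OF y0] u v uv])
  next
    fix j
    define c where "c = ss $ j + ssr"
    have c0: "0 \<le> c" using nn by (simp add: c_def)
    have g: "g_j r S j = (1 - r^2) * c" for r unfolding Se g_j_eq c_def ..
    have g0: "0 \<le> g_j r S j" if "r \<in> {0..1}" for r
    proof -
      have "r^2 \<le> 1" using that by (intro power_le_one) auto
      thus ?thesis unfolding g using c0 by simp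
    qed
    have le: "u * g_j x S j + v * g_j y S j \<le> g_j (u * x + v * y) S j"
    proof -
      have "u * g_j x S j + v * g_j y S j = ((u + v) - (u * x^2 + v * y^2)) * c"
        unfolding g by (simp add: algebra_simps)
      also have "\<dots> = (1 - (u * x^2 + v * y^2)) * c" using uv by simp
      also have "\<dots> \<le> (1 - (u * x + v * y)^2) * c"
        using sq_conv[OF u v uv, of x y] c0 by (intro mult_right_mono) auto
      finally show ?thesis unfolding g .
    qed
    have "u * Ccap (g_j x S j) + v * Ccap (g_j y S j) \<le> Ccap (u * g_j x S j + v * g_j y S j)"
      by (rule Cconc[OF g0[OF x] g0[OF y] u v uv])
    also have "\<dots> \<le> Ccap (g_j (u * x + v * y) S j)"
    proof (rule Cmono[OF _ le])
      show "0 \<le> u * g_j x S j + v * g_j y S j"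
        using g0[OF x] g0[OF y] u v by simp
    qed
    finally show "u * Ccap (g_j x S j) + v * Ccap (g_j y S j) \<le> Ccap (g_j (u * x + v * y) S j)" .
  qed
  show ?thesis unfolding concave_on_iff
    using main by (simp add: real_scaleR_def)
qed

lemma part2:
  fixes \<rho> :: real
  assumes r: "0 \<le> \<rho> \<and> \<rho> \<le> 1"
  shows "concave_on (snr_dom :: ('n::finite) snr_vec set) (\<lambda>S. R_CS \<rho> S)"
proof -
  have r0: "0 \<le> \<rho>" and r1: "\<rho>^2 \<le> 1" using r by (auto intro: power_le_one)
  have f0: "0 \<le> f_j \<rho> S j" if "S \<in> snr_dom" for S :: "'n snr_vec" and j
  proof -
    obtain a b c where e: "S = (a, b, c)" by (cases S) auto
    have "0 \<le> b $ j" "0 \<le> c $ j" using that by (auto simp: e dom_iff)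
    thus ?thesis unfolding e f_j_eq using r0 by simp
  qed
  have g0: "0 \<le> g_j \<rho> S j" if "S \<in> snr_dom" for S :: "'n snr_vec" and j
  proof -
    obtain a b c where e: "S = (a, b, c)" by (cases S) auto
    have "0 \<le> b $ j" "0 \<le> a" using that by (auto simp: e dom_iff)
    thus ?thesis unfolding e g_j_eq using r1 by simp
  qed
  have main: "u * R_CS \<rho> S1 + v * R_CS \<rho> S2 \<le> R_CS \<rho> (u *\<^sub>R S1 + v *\<^sub>R S2)"
    if S1: "S1 \<in> snr_dom" and S2: "S2 \<in> snr_dom" and u: "0 \<le> u" and v: "0 \<le> v" and uv: "u + v = 1"
    for S1 S2 :: "'n snr_vec" and u v :: real
  proof -
    obtain a1 b1 c1 where e1: "S1 = (a1, b1, c1)" by (cases S1) auto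
    obtain a2 b2 c2 where e2: "S2 = (a2, b2, c2)" by (cases S2) auto
    have n1: "0 \<le> a1" "\<And>j. 0 \<le> b1 $ j" "\<And>j. 0 \<le> c1 $ j" using S1 by (auto simp: e1 dom_iff)
    have n2: "0 \<le> a2" "\<And>j. 0 \<le> b2 $ j" "\<And>j. 0 \<le> c2 $ j" using S2 by (auto simp: e2 dom_iff)
    have Sz: "u *\<^sub>R S1 + v *\<^sub>R S2 = (u * a1 + v * a2, u *\<^sub>R b1 + v *\<^sub>R b2, u *\<^sub>R c1 + v *\<^sub>R c2)"
      by (simp add: e1 e2)
    have comp: "(u *\<^sub>R b1 + v *\<^sub>R b2) $ j = u * b1 $ j + v * b2 $ j"
      "(u *\<^sub>R c1 + v *\<^sub>R c2) $ j = u * c1 $ j + v * c2 $ j" for j by simp_all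
    show ?thesis
    proof (rule Rconc[OF u v])
      fix j
      have gm: "u * sqrt (b1 $ j * c1 $ j) + v * sqrt (b2 $ j * c2 $ j) \<le> sqrt ((u * b1 $ j + v * b2 $ j) * (u * c1 $ j + v * c2 $ j))"
        using gm_conc[OF n1(2) n2(2) n1(3) n2(3) u v] .
      have le: "u * f_j \<rho> S1 j + v * f_j \<rho> S2 j \<le> f_j \<rho> (u *\<^sub>R S1 + v *\<^sub>R S2) j"
      proof -
        have "u * f_j \<rho> S1 j + v * f_j \<rho> S2 j = (u * b1 $ j + v * b2 $ j) + (u * c1 $ j + v * c2 $ j) + 2 * \<rho> * (u * sqrt (b1 $ j * c1 $ j) + v * sqrt (b2 $ j * c2 $ j))"
          unfolding e1 e2 f_j_eq by (simp add: algebra_simps)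
        also have "\<dots> \<le> (u * b1 $ j + v * b2 $ j) + (u * c1 $ j + v * c2 $ j) + 2 * \<rho> * sqrt ((u * b1 $ j + v * b2 $ j) * (u * c1 $ j + v * c2 $ j))"
          using mult_left_mono[OF gm, of "2 * \<rho>"] r0 by simp
        also have "\<dots> = f_j \<rho> (u *\<^sub>R S1 + v *\<^sub>R S2) j" unfolding Sz f_j_eq comp ..
        finally show ?thesis .
      qed
      have "u * Ccap (f_j \<rho> S1 j) + v * Ccap (f_j \<rho> S2 j) \<le> Ccap (u * f_j \<rho> S1 j + v * f_j \<rho> S2 j)"
        by (rule Cconc[OF f0[OF S1] f0[OF S2] u v uv])
      also have "\<dots> \<le> Ccap (f_j \<rho> (u *\<^sub>R S1 + v *\<^sub>R S2) j)"
      proof (rule Cmono[OF _ le])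
        show "0 \<le> u * f_j \<rho> S1 j + v * f_j \<rho> S2 j" using f0[OF S1, of j] f0[OF S2, of j] u v by simp
      qed
      finally show "u * Ccap (f_j \<rho> S1 j) + v * Ccap (f_j \<rho> S2 j) \<le> Ccap (f_j \<rho> (u *\<^sub>R S1 + v *\<^sub>R S2) j)" .
    next
      fix j
      have eq: "g_j \<rho> (u *\<^sub>R S1 + v *\<^sub>R S2) j = u * g_j \<rho> S1 j + v * g_j \<rho> S2 j"
      proof -
        have h0: "g_j \<rho> (u * a1 + v * a2, u *\<^sub>R b1 + v *\<^sub>R b2, u *\<^sub>R c1 + v *\<^sub>R c2) j = (1 - \<rho>^2) * ((u * b1 $ j + v * b2 $ j) + (u * a1 + v * a2))"
          by (simp only: g_j_eq comp)
        have h1: "g_j \<rho> S1 j = (1 - \<rho>^2) * (b1 $ j + a1)" "g_j \<rho> S2 j = (1 - \<rho>^2) * (b2 $ j + a2)"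
          unfolding e1 e2 by (simp_all only: g_j_eq)
        show ?thesis unfolding Sz h0 h1 by (simp add: algebra_simps)
      qed
      show "u * Ccap (g_j \<rho> S1 j) + v * Ccap (g_j \<rho> S2 j) \<le> Ccap (g_j \<rho> (u *\<^sub>R S1 + v *\<^sub>R S2) j)"
        unfolding eq by (rule Cconc[OF g0[OF S1] g0[OF S2] u v uv])
    qed
  qed
  show ?thesis unfolding concave_on_iff
    using main convex_dom by blast
qed

lemma part3:
  shows "quasiconcave_on ({0..1} \<times> (snr_dom :: ('n::finite) snr_vec set)) (\<lambda>(t, S). R_CS (sqrt t) S)"
  unfolding quasiconcave_on_def
proof (intro ballI allI impI)
  fix x1 x2 :: "real \<times> 'n snr_vec" and u :: real
  assume x1: "x1 \<in> {0..1} \<times> snr_dom" and x2: "x2 \<in> {0..1} \<times> snr_dom" and u: "0 \<le> u \<and> u \<le> 1"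
  define v where "v = 1 - u"
  have u0: "0 \<le> u" and v0: "0 \<le> v" and uv: "u + v = 1" using u by (auto simp: v_def)
  obtain t1 a1 b1 c1 where e1: "x1 = (t1, a1, b1, c1)" by (cases x1) auto
  obtain t2 a2 b2 c2 where e2: "x2 = (t2, a2, b2, c2)" by (cases x2) auto
  have n1: "0 \<le> t1" "t1 \<le> 1" "0 \<le> a1" "\<And>j. 0 \<le> b1 $ j" "\<And>j. 0 \<le> c1 $ j" using x1 by (auto simp: e1 dom_iff)
  have n2: "0 \<le> t2" "t2 \<le> 1" "0 \<le> a2" "\<And>j. 0 \<le> b2 $ j" "\<And>j. 0 \<le> c2 $ j" using x2 by (auto simp: e2 dom_iff)
  have z: "u *\<^sub>R x1 + (1 - u) *\<^sub>R x2 = (u * t1 + v * t2, u * a1 + v * a2, u *\<^sub>R b1 + v *\<^sub>R b2, u *\<^sub>R c1 + v *\<^sub>R c2)"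
    unfolding e1 e2 v_def by simp
  have comp: "(u *\<^sub>R b1 + v *\<^sub>R b2) $ j = u * b1 $ j + v * b2 $ j"
    "(u *\<^sub>R c1 + v *\<^sub>R c2) $ j = u * c1 $ j + v * c2 $ j" for j by simp_all
  have fF: "f_j (sqrt t) (a, b, c) j = FF t (b $ j) (c $ j)" for t a b c and j :: 'n
    by (simp add: f_j_eq FF_def)
  have gG: "g_j (sqrt t) (a, b, c) j = (1 - t) * (b $ j + a)" if "0 \<le> t" for t a b c and j :: 'n
    using that by (simp add: g_j_eq)
  have tz: "0 \<le> u * t1 + v * t2" using n1 n2 u0 v0 by simp
  have "min (R_CS (sqrt t1) (a1, b1, c1)) (R_CS (sqrt t2) (a2, b2, c2))
        \<le> R_CS (sqrt (u * t1 + v * t2)) (u * a1 + v * a2, u *\<^sub>R b1 + v *\<^sub>R b2, u *\<^sub>R c1 + v *\<^sub>R c2)"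
  proof (rule Rquasi)
    fix j
    have q: "min (FF t1 (b1 $ j) (c1 $ j)) (FF t2 (b2 $ j) (c2 $ j)) \<le> FF (u * t1 + v * t2) (u * b1 $ j + v * b2 $ j) (u * c1 $ j + v * c2 $ j)"
      by (rule quasiF[OF n1(1) n2(1) n1(4) n2(4) n1(5) n2(5) u0 v0 uv])
    have p1: "0 \<le> FF t1 (b1 $ j) (c1 $ j)" using n1 by (intro FF_nonneg) auto
    have p2: "0 \<le> FF t2 (b2 $ j) (c2 $ j)" using n2 by (intro FF_nonneg) auto
    have "min (Ccap (FF t1 (b1 $ j) (c1 $ j))) (Ccap (FF t2 (b2 $ j) (c2 $ j)))
        = Ccap (min (FF t1 (b1 $ j) (c1 $ j)) (FF t2 (b2 $ j) (c2 $ j)))"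
      by (rule Cmin[OF p1 p2, symmetric])
    also have "\<dots> \<le> Ccap (FF (u * t1 + v * t2) (u * b1 $ j + v * b2 $ j) (u * c1 $ j + v * c2 $ j))"
      using q p1 p2 by (intro Cmono) auto
    finally show "min (Ccap (f_j (sqrt t1) (a1, b1, c1) j)) (Ccap (f_j (sqrt t2) (a2, b2, c2) j))
          \<le> Ccap (f_j (sqrt (u * t1 + v * t2)) (u * a1 + v * a2, u *\<^sub>R b1 + v *\<^sub>R b2, u *\<^sub>R c1 + v *\<^sub>R c2) j)"
      unfolding fF comp .
  next
    fix j
    have "min ((1 - t1) * (b1 $ j + a1)) ((1 - t2) * (b2 $ j + a2)) \<le> (1 - (u * t1 + v * t2)) * (u * (b1 $ j + a1) + v * (b2 $ j + a2))"
      using quasiG[OF n1(2) n2(2) _ _ u0 v0 uv] n1 n2 by simp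
    also have "u * (b1 $ j + a1) + v * (b2 $ j + a2) = (u * b1 $ j + v * b2 $ j) + (u * a1 + v * a2)"
      by (simp add: algebra_simps)
    finally have m: "min ((1 - t1) * (b1 $ j + a1)) ((1 - t2) * (b2 $ j + a2)) \<le> (1 - (u * t1 + v * t2)) * ((u * b1 $ j + v * b2 $ j) + (u * a1 + v * a2))" .
    have p1: "0 \<le> (1 - t1) * (b1 $ j + a1)" using n1 by simp
    have p2: "0 \<le> (1 - t2) * (b2 $ j + a2)" using n2 by simp
    have "min (Ccap ((1 - t1) * (b1 $ j + a1))) (Ccap ((1 - t2) * (b2 $ j + a2)))
        = Ccap (min ((1 - t1) * (b1 $ j + a1)) ((1 - t2) * (b2 $ j + a2)))"
      by (rule Cmin[OF p1 p2, symmetric])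
    also have "\<dots> \<le> Ccap ((1 - (u * t1 + v * t2)) * ((u * b1 $ j + v * b2 $ j) + (u * a1 + v * a2)))"
      using m p1 p2 by (intro Cmono) auto
    finally show "min (Ccap (g_j (sqrt t1) (a1, b1, c1) j)) (Ccap (g_j (sqrt t2) (a2, b2, c2) j))
          \<le> Ccap (g_j (sqrt (u * t1 + v * t2)) (u * a1 + v * a2, u *\<^sub>R b1 + v *\<^sub>R b2, u *\<^sub>R c1 + v *\<^sub>R c2) j)"
      unfolding gG[OF n1(1)] gG[OF n2(1)] gG[OF tz] comp .
  qed
  thus "min ((\<lambda>(t, S). R_CS (sqrt t) S) x1) ((\<lambda>(t, S). R_CS (sqrt t) S) x2)
        \<le> (\<lambda>(t, S). R_CS (sqrt t) S) (u *\<^sub>R x1 + (1 - u) *\<^sub>R x2)"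
    unfolding z e1 e2 by (simp add: v_def)
qed

theorem theorem1:
  shows "(\<forall>S::('n::finite) snr_vec. S \<in> snr_dom \<longrightarrow> concave_on {0..1} (\<lambda>\<rho>. R_CS \<rho> S))
       \<and> (\<forall>\<rho>::real. 0 \<le> \<rho> \<and> \<rho> \<le> 1 \<longrightarrow> concave_on (snr_dom :: 'n snr_vec set) (\<lambda>S. R_CS \<rho> S))
       \<and> quasiconcave_on ({0..1} \<times> (snr_dom :: 'n snr_vec set)) (\<lambda>(t, S). R_CS (sqrt t) S)"
  using part1 part2 part3 by blast

end
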